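(* Let $\alpha_1,\dots,\alpha_K\in\mathbb R^d\setminus\{0\}$ and $\eta_1,\dots,\eta_J\in\mathbb R^d$, and let $\mathcal G=\{\sum_{j=1}^J\nu_j\eta_j:\nu_j\in[0,1],\sum_j\nu_j=1\}$. Writing $\pi(\eta)$ for the canonical projection of $\eta$ with respect to $\{\alpha_1,\dots,\alpha_K\}$, suppose $\|\pi(\eta_1)\|>\max_{j=2,\dots,J}\|\pi(\eta_j)\|$. Then $\eta_1$ is the unique maximizer of $\eta\mapsto\|\pi(\eta)\|$ over $\mathcal G$.
   Context: Canonical projection: for $\eta\ne0$, choose a (possibly empty) subset $\{\alpha_{k_1},\dots,\alpha_{k_m}\}$ of $\{\alpha_1,\dots,\alpha_K\}$, $\mathcal H_\eta$ its span, such that $P_{\mathcal H_\eta}\eta=\sum_p\gamma_{k_p}\alpha_{k_p}$ with all $\gamma_{k_p}\ge0$ and $\alpha_k^{T}P_{\mathcal H_\eta^\perp}\eta<0$ for all $k\notin\{k_1,\dots,k_m\}$; such a subset exists and $\pi(\eta):=P_{\mathcal H_\eta^\perp}\eta$ is uniquely determined and continuous in $\eta$ (set $\pi(0)=0$). $P$ denotes orthogonal projection. *)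

theory Defs
  imports "HOL-Analysis.Analysis"
begin

definition orth_proj :: "'a::euclidean_space set \<Rightarrow> 'a \<Rightarrow> 'a" where
  "orth_proj H x = (THE p. p \<in> H \<and> (\<forall>h\<in>H. (x - p) \<bullet> h = 0))"

definition orth_compl :: "'a::euclidean_space set \<Rightarrow> 'a set" where
  "orth_compl H = {y. \<forall>h\<in>H. y \<bullet> h = 0}"

definition canon_subset :: "(nat \<Rightarrow> 'a::euclidean_space) \<Rightarrow> nat \<Rightarrow> 'a \<Rightarrow> nat set \<Rightarrow> bool" where
  "canon_subset alpha K eta S \<longleftrightarrow>
     S \<subseteq> {1..K} \<and>
     (\<exists>\<gamma>::nat \<Rightarrow> real. (\<forall>k\<in>S. \<gamma> k \<ge> 0) \<and>
        orth_proj (span (alpha ` S)) eta = (\<Sum>k\<in>S. \<gamma> k *\<^sub>R alpha k)) \<and>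
     (\<forall>k\<in>{1..K} - S. alpha k \<bullet> orth_proj (orth_compl (span (alpha ` S))) eta < 0)"

definition canon_proj :: "(nat \<Rightarrow> 'a::euclidean_space) \<Rightarrow> nat \<Rightarrow> 'a \<Rightarrow> 'a" where
  "canon_proj alpha K eta =
     (if eta = 0 then 0
      else THE v. \<exists>S. canon_subset alpha K eta S \<and>
                    v = orth_proj (orth_compl (span (alpha ` S))) eta)"

end

theory Submission
  imports Defs
begin

lemma orth_proj_eqI:
  fixes M :: "'a::euclidean_space set"
  assumes "subspace M" "p \<in> M" "\<forall>h\<in>M. (x - p) \<bullet> h = 0"
  shows "orth_proj M x = p"
  unfolding orth_proj_def
proof (rule the_equality)
  show "p \<in> M \<and> (\<forall>h\<in>M. (x - p) \<bullet> h = 0)" using assms by auto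
next
  fix q assume q: "q \<in> M \<and> (\<forall>h\<in>M. (x - q) \<bullet> h = 0)"
  have d: "q - p \<in> M" using assms q by (simp add: subspace_diff)
  have "(x - q) \<bullet> (q - p) = 0" "(x - p) \<bullet> (q - p) = 0" using q d assms by auto
  then have "(q - p) \<bullet> (q - p) = 0" by (simp add: algebra_simps inner_diff_left)
  then show "q = p" by simp
qed

lemma orth_proj_span:
  fixes A :: "'a::euclidean_space set"
  shows "orth_proj (span A) x \<in> span A \<and> (\<forall>h\<in>span A. (x - orth_proj (span A) x) \<bullet> h = 0)"
proof -
  obtain y z where y: "y \<in> span A" and z: "\<And>w. w \<in> span A \<Longrightarrow> orthogonal z w" and xyz: "x = y + z"
    by (rule orthogonal_subspace_decomp_exists[of A x]) blast
  have "orth_proj (span A) x = y"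
    by (rule orth_proj_eqI) (use y z xyz in \<open>auto simp: orthogonal_def\<close>)
  then show ?thesis using y z xyz by (auto simp: orthogonal_def)
qed

lemma subspace_orth_compl: "subspace (orth_compl H)"
  unfolding subspace_def orth_compl_def by (auto simp: inner_add_left)

lemma orth_proj_compl_span:
  fixes A :: "'a::euclidean_space set"
  shows "orth_proj (orth_compl (span A)) x = x - orth_proj (span A) x"
proof (rule orth_proj_eqI[OF subspace_orth_compl])
  show "x - orth_proj (span A) x \<in> orth_compl (span A)"
    using orth_proj_span[of A x] by (auto simp: orth_compl_def)
  show "\<forall>h\<in>orth_compl (span A). (x - (x - orth_proj (span A) x)) \<bullet> h = 0"
    using orth_proj_span[of A x] by (auto simp: orth_compl_def inner_commute)
qed

definition Cn :: "(nat \<Rightarrow> 'a::euclidean_space) \<Rightarrow> nat \<Rightarrow> 'a set" where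
  "Cn alpha K = {\<Sum>k\<in>{1..K}. g k *\<^sub>R alpha k | g. \<forall>k. 0 \<le> g k}"

lemma Cn_memI:
  assumes "x = (\<Sum>k\<in>{1..K}. g k *\<^sub>R alpha k)" "\<forall>k. 0 \<le> g k"
  shows "x \<in> Cn alpha K"
  unfolding Cn_def by (rule CollectI, rule exI[of _ g]) (use assms in simp)

lemma convex_cone_sum_mem:
  assumes "convex_cone T" "finite I" "\<forall>i\<in>I. f i \<in> T"
  shows "sum f I \<in> T"
  using assms(2,3)
proof (induction I rule: finite_induct)
  case empty then show ?case using convex_cone_contains_0[OF assms(1)] by simp
next
  case (insert i I) then show ?case using convex_cone_add[OF assms(1)] by simp
qed

lemma convex_cone_Cn: "convex_cone (Cn alpha K)"
  unfolding convex_cone_def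
proof (intro conjI)
  have "(\<Sum>k\<in>{1..K}. (0::real) *\<^sub>R alpha k) \<in> Cn alpha K" unfolding Cn_def by (rule CollectI, rule exI[of _ "\<lambda>_. 0"]) simp
  then show "Cn alpha K \<noteq> {}" by auto
  show "convex (Cn alpha K)"
    unfolding convex_alt
  proof (intro ballI allI impI)
    fix x y and u :: real assume x: "x \<in> Cn alpha K" and y: "y \<in> Cn alpha K" and u: "0 \<le> u \<and> u \<le> 1"
    obtain g where g: "x = (\<Sum>k\<in>{1..K}. g k *\<^sub>R alpha k)" "\<forall>k. 0 \<le> g k" using x unfolding Cn_def by auto
    obtain h where h: "y = (\<Sum>k\<in>{1..K}. h k *\<^sub>R alpha k)" "\<forall>k. 0 \<le> h k" using y unfolding Cn_def by auto
    have "(1 - u) *\<^sub>R x + u *\<^sub>R y = (\<Sum>k\<in>{1..K}. ((1-u) * g k + u * h k) *\<^sub>R alpha k)"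
      by (simp add: g h scaleR_sum_right sum.distrib[symmetric] scaleR_add_left)
    moreover have "\<forall>k. 0 \<le> (1-u) * g k + u * h k" using g h u by auto
    ultimately show "(1 - u) *\<^sub>R x + u *\<^sub>R y \<in> Cn alpha K" by (rule Cn_memI)
  qed
  show "conic (Cn alpha K)"
    unfolding conic_def
  proof (intro allI impI)
    fix x and c :: real assume x: "x \<in> Cn alpha K" and c: "0 \<le> c"
    obtain g where g: "x = (\<Sum>k\<in>{1..K}. g k *\<^sub>R alpha k)" "\<forall>k. 0 \<le> g k" using x unfolding Cn_def by auto
    have "c *\<^sub>R x = (\<Sum>k\<in>{1..K}. (c * g k) *\<^sub>R alpha k)" by (simp add: g scaleR_sum_right)
    moreover have "\<forall>k. 0 \<le> c * g k" using g c by auto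
    ultimately show "c *\<^sub>R x \<in> Cn alpha K" by (rule Cn_memI)
  qed
qed

lemma alpha_in_Cn: assumes "k \<in> {1..K}" shows "alpha k \<in> Cn alpha K"
proof -
  have "(\<Sum>j\<in>{1..K}. (if j = k then 1 else 0) *\<^sub>R alpha j) = (\<Sum>j\<in>{1..K}. if j = k then alpha j else 0)"
    by (rule sum.cong) auto
  also have "\<dots> = alpha k" using assms by (subst sum.delta) auto
  finally have "(\<Sum>j\<in>{1..K}. (if j = k then 1 else 0) *\<^sub>R alpha j) = alpha k" .
  then have "alpha k = (\<Sum>j\<in>{1..K}. (if j = k then 1 else 0) *\<^sub>R alpha j)" by simp
  then show ?thesis by (rule Cn_memI[where g="\<lambda>j. if j = k then 1 else 0"]) auto
qed

lemma Cn_hull: "Cn alpha K = convex_cone hull (alpha ` {1..K})"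
proof (rule hull_unique[symmetric])
  show "alpha ` {1..K} \<subseteq> Cn alpha K" by (rule image_subsetI, rule alpha_in_Cn)
  show "convex_cone (Cn alpha K)" by (rule convex_cone_Cn)
  fix T assume T: "alpha ` {1..K} \<subseteq> T" "convex_cone T"
  show "Cn alpha K \<subseteq> T"
  proof
    fix x assume "x \<in> Cn alpha K"
    then obtain g where g: "x = (\<Sum>k\<in>{1..K}. g k *\<^sub>R alpha k)" "\<forall>k. 0 \<le> g k" unfolding Cn_def by auto
    show "x \<in> T" unfolding g(1)
      by (rule convex_cone_sum_mem[OF T(2)]) (use T g in \<open>auto intro: convex_cone_scaleR\<close>)
  qed
qed

lemma closed_Cn: "closed (Cn alpha K)"
  unfolding Cn_hull by (rule closed_convex_cone_hull) simp

lemma convex_Cn: "convex (Cn alpha K)"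
  using convex_cone_Cn unfolding convex_cone_def by auto

lemma zero_Cn: "0 \<in> Cn alpha K"
  using convex_cone_Cn convex_cone_contains_0 by blast


lemma Cn_sum_mem:
  assumes "finite I" "\<forall>i\<in>I. f i \<in> Cn alpha K"
  shows "sum f I \<in> Cn alpha K"
  by (rule convex_cone_sum_mem[OF convex_cone_Cn assms])

lemma cp_facts:
  fixes alpha :: "nat \<Rightarrow> 'a::euclidean_space" and K :: nat and eta :: 'a
  defines "c \<equiv> closest_point (Cn alpha K) eta"
  shows "c \<in> Cn alpha K" "(eta - c) \<bullet> c = 0" "\<forall>y\<in>Cn alpha K. (eta - c) \<bullet> y \<le> 0"
proof -
  have ne: "Cn alpha K \<noteq> {}" using zero_Cn by auto
  show cin: "c \<in> Cn alpha K" unfolding c_def by (rule closest_point_in_set[OF closed_Cn ne])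
  have dot: "\<And>y. y \<in> Cn alpha K \<Longrightarrow> (eta - c) \<bullet> (y - c) \<le> 0"
    unfolding c_def by (rule closest_point_dot[OF convex_Cn closed_Cn])
  have "(eta - c) \<bullet> (0 - c) \<le> 0" by (rule dot[OF zero_Cn])
  moreover have "(eta - c) \<bullet> (2 *\<^sub>R c - c) \<le> 0"
    by (rule dot, rule convex_cone_scaleR[OF convex_cone_Cn _ cin]) simp
  ultimately show "(eta - c) \<bullet> c = 0" by (simp add: inner_diff_right algebra_simps)
  then show "\<forall>y\<in>Cn alpha K. (eta - c) \<bullet> y \<le> 0"
    using dot by (auto simp: inner_diff_right)
qed

lemma norm_add_sq:
  fixes a b :: "'a::real_inner"
  shows "(norm (a + b))^2 = (norm a)^2 + 2 * (a \<bullet> b) + (norm b)^2"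
  by (simp add: power2_norm_eq_inner inner_add_left inner_add_right inner_commute)

lemma canon_subset_value:
  fixes alpha :: "nat \<Rightarrow> 'a::euclidean_space"
  assumes "canon_subset alpha K eta S"
  shows "orth_proj (orth_compl (span (alpha ` S))) eta = eta - closest_point (Cn alpha K) eta"
proof -
  let ?H = "span (alpha ` S)"
  define u where "u = orth_proj ?H eta"
  have SK: "S \<subseteq> {1..K}" using assms unfolding canon_subset_def by auto
  obtain \<gamma> where g: "\<forall>k\<in>S. \<gamma> k \<ge> 0" "u = (\<Sum>k\<in>S. \<gamma> k *\<^sub>R alpha k)"
    using assms unfolding canon_subset_def u_def by auto
  have neg: "\<forall>k\<in>{1..K} - S. alpha k \<bullet> (eta - u) < 0"
    using assms unfolding canon_subset_def u_def orth_proj_compl_span by auto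
  have uH: "u \<in> ?H" and orth: "\<forall>h\<in>?H. (eta - u) \<bullet> h = 0"
    using orth_proj_span[of "alpha ` S" eta] unfolding u_def by auto
  have uC: "u \<in> Cn alpha K"
  proof (rule Cn_memI[where g="\<lambda>k. if k \<in> S then \<gamma> k else 0"])
    show "u = (\<Sum>k\<in>{1..K}. (if k \<in> S then \<gamma> k else 0) *\<^sub>R alpha k)"
      unfolding g(2) using SK
      by (intro sum.mono_neutral_cong_left) auto
    show "\<forall>k. 0 \<le> (if k \<in> S then \<gamma> k else 0)" using g(1) by auto
  qed
  have vneg: "\<forall>y\<in>Cn alpha K. (eta - u) \<bullet> y \<le> 0"
  proof
    fix y assume "y \<in> Cn alpha K"
    then obtain h where h: "y = (\<Sum>k\<in>{1..K}. h k *\<^sub>R alpha k)" "\<forall>k. 0 \<le> h k" unfolding Cn_def by auto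
    have "(eta - u) \<bullet> y = (\<Sum>k\<in>{1..K}. h k * ((eta - u) \<bullet> alpha k))"
      by (simp add: h inner_sum_right)
    also have "\<dots> \<le> 0"
    proof (rule sum_nonpos)
      fix k assume k: "k \<in> {1..K}"
      have "(eta - u) \<bullet> alpha k \<le> 0"
      proof (cases "k \<in> S")
        case True then show ?thesis using orth span_base[of "alpha k" "alpha ` S"] by auto
      next
        case False
        then have "alpha k \<bullet> (eta - u) < 0" using neg k by blast
        then show ?thesis by (simp add: inner_commute)
      qed
      then show "h k * ((eta - u) \<bullet> alpha k) \<le> 0" using h(2) by (simp add: mult_nonneg_nonpos)
    qed
    finally show "(eta - u) \<bullet> y \<le> 0" .
  qed
  have vu: "(eta - u) \<bullet> u = 0" using orth uH by auto
  have close: "\<forall>y\<in>Cn alpha K. dist eta u \<le> dist eta y"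
  proof
    fix y assume y: "y \<in> Cn alpha K"
    have "(dist eta y)^2 = (norm ((eta - u) + (u - y)))^2" proof - have "(eta - u) + (u - y) = eta - y" by simp then show ?thesis by (simp only: dist_norm) qed
    also have "\<dots> = (norm (eta - u))^2 + 2 * ((eta - u) \<bullet> (u - y)) + (norm (u - y))^2"
      by (rule norm_add_sq)
    also have "\<dots> \<ge> (norm (eta - u))^2"
    proof -
      have "(eta - u) \<bullet> y \<le> 0" using vneg y by blast
      then have "0 \<le> 2 * ((eta - u) \<bullet> (u - y))" using vu by (simp add: inner_diff_right)
      moreover have "0 \<le> (norm (u - y))^2" by simp
      ultimately show ?thesis by linarith
    qed
    finally have "(dist eta u)^2 \<le> (dist eta y)^2" by (simp only: dist_norm)
    then show "dist eta u \<le> dist eta y" by (rule power2_le_imp_le) simp_all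
  qed
  have "u = closest_point (Cn alpha K) eta"
    by (rule closest_point_unique[OF convex_Cn closed_Cn uC close])
  then show ?thesis unfolding orth_proj_compl_span u_def by simp
qed


lemma canon_subset_exists:
  fixes alpha :: "nat \<Rightarrow> 'a::euclidean_space" and K :: nat and eta :: 'a
  shows "\<exists>S. canon_subset alpha K eta S"
proof -
  define c where "c = closest_point (Cn alpha K) eta"
  define p where "p = eta - c"
  have cC: "c \<in> Cn alpha K" and pc: "p \<bullet> c = 0" and py: "\<forall>y\<in>Cn alpha K. p \<bullet> y \<le> 0"
    using cp_facts[where alpha=alpha and K=K and eta=eta] unfolding c_def p_def by auto
  have pa: "\<And>k. k \<in> {1..K} \<Longrightarrow> p \<bullet> alpha k \<le> 0" using py alpha_in_Cn by blast
  define S where "S = {k\<in>{1..K}. alpha k \<bullet> p = 0}"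
  obtain g where g: "c = (\<Sum>k\<in>{1..K}. g k *\<^sub>R alpha k)" "\<forall>k. 0 \<le> g k"
    using cC unfolding Cn_def by auto
  have "(\<Sum>k\<in>{1..K}. - (g k * (p \<bullet> alpha k))) = - (p \<bullet> c)"
    by (simp add: g inner_sum_right sum_negf)
  also have "\<dots> = 0" using pc by simp
  finally have "\<forall>k\<in>{1..K}. - (g k * (p \<bullet> alpha k)) = 0"
    by (subst sum_nonneg_eq_0_iff[symmetric]) (use g(2) pa in \<open>auto simp: mult_nonneg_nonpos\<close>)
  then have gz: "\<forall>k\<in>{1..K} - S. g k = 0" unfolding S_def by (auto simp: inner_commute)
  have cS: "c = (\<Sum>k\<in>S. g k *\<^sub>R alpha k)"
    unfolding g(1) using gz by (intro sum.mono_neutral_cong_right) (auto simp: S_def)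
  have cspan: "c \<in> span (alpha ` S)"
    unfolding cS by (intro span_sum span_mul span_base) auto
  have porth: "\<forall>h\<in>span (alpha ` S). p \<bullet> h = 0"
  proof
    fix h assume "h \<in> span (alpha ` S)"
    moreover have "\<And>y. y \<in> alpha ` S \<Longrightarrow> orthogonal p y"
      unfolding S_def orthogonal_def by (auto simp: inner_commute)
    ultimately have "orthogonal p h" by (rule orthogonal_to_span)
    then show "p \<bullet> h = 0" by (simp add: orthogonal_def)
  qed
  have P: "orth_proj (span (alpha ` S)) eta = c"
    by (rule orth_proj_eqI[OF subspace_span cspan]) (use porth in \<open>simp add: p_def\<close>)
  have "canon_subset alpha K eta S"
    unfolding canon_subset_def
  proof (intro conjI)
    show "S \<subseteq> {1..K}" by (auto simp: S_def)
    show "\<exists>\<gamma>. (\<forall>k\<in>S. 0 \<le> \<gamma> k) \<and> orth_proj (span (alpha ` S)) eta = (\<Sum>k\<in>S. \<gamma> k *\<^sub>R alpha k)"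
      using g(2) P cS by blast
    show "\<forall>k\<in>{1..K} - S. alpha k \<bullet> orth_proj (orth_compl (span (alpha ` S))) eta < 0"
    proof
      fix k assume k: "k \<in> {1..K} - S"
      then have "alpha k \<bullet> p \<le> 0" "alpha k \<bullet> p \<noteq> 0" using pa[of k] by (auto simp: S_def inner_commute)
      then show "alpha k \<bullet> orth_proj (orth_compl (span (alpha ` S))) eta < 0"
        unfolding orth_proj_compl_span P p_def by simp
    qed
  qed
  then show ?thesis by blast
qed

lemma canon_proj_eq:
  fixes alpha :: "nat \<Rightarrow> 'a::euclidean_space" and K :: nat and eta :: 'a
  shows "canon_proj alpha K eta = eta - closest_point (Cn alpha K) eta"
proof (cases "eta = 0")
  case True
  then show ?thesis unfolding canon_proj_def using closest_point_self[OF zero_Cn] by simp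
next
  case False
  obtain S where S: "canon_subset alpha K eta S" using canon_subset_exists by blast
  show ?thesis unfolding canon_proj_def using False
  proof (simp, intro the_equality)
    show "\<exists>S. canon_subset alpha K eta S \<and>
      eta - closest_point (Cn alpha K) eta = orth_proj (orth_compl (span (alpha ` S))) eta"
      using S canon_subset_value by metis
    fix v assume "\<exists>S. canon_subset alpha K eta S \<and> v = orth_proj (orth_compl (span (alpha ` S))) eta"
    then show "v = eta - closest_point (Cn alpha K) eta" using canon_subset_value by metis
  qed
qed


lemma cp_convex_bound:
  fixes alpha :: "nat \<Rightarrow> 'a::euclidean_space" and eta :: "nat \<Rightarrow> 'a"
  assumes "finite I" "\<forall>j\<in>I. 0 \<le> \<nu> j"
  shows "norm (canon_proj alpha K (\<Sum>j\<in>I. \<nu> j *\<^sub>R eta j))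
         \<le> (\<Sum>j\<in>I. \<nu> j * norm (canon_proj alpha K (eta j)))"
proof -
  let ?C = "Cn alpha K"
  let ?cp = "closest_point ?C"
  define x where "x = (\<Sum>j\<in>I. \<nu> j *\<^sub>R eta j)"
  define c where "c = (\<Sum>j\<in>I. \<nu> j *\<^sub>R ?cp (eta j))"
  have ne: "?C \<noteq> {}" using zero_Cn by auto
  have cC: "c \<in> ?C" unfolding c_def
    using assms by (intro Cn_sum_mem) (auto intro!: convex_cone_scaleR[OF convex_cone_Cn] closest_point_in_set[OF closed_Cn ne])
  have "norm (canon_proj alpha K x) = dist x (?cp x)" by (simp add: canon_proj_eq dist_norm)
  also have "\<dots> \<le> dist x c" by (rule closest_point_le[OF closed_Cn cC])
  also have "x - c = (\<Sum>j\<in>I. \<nu> j *\<^sub>R (eta j - ?cp (eta j)))"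
    by (simp add: x_def c_def sum_subtractf scaleR_diff_right)
  then have "dist x c = norm (\<Sum>j\<in>I. \<nu> j *\<^sub>R (eta j - ?cp (eta j)))" by (simp add: dist_norm)
  also have "\<dots> \<le> (\<Sum>j\<in>I. norm (\<nu> j *\<^sub>R (eta j - ?cp (eta j))))" by (rule norm_sum)
  also have "\<dots> = (\<Sum>j\<in>I. \<nu> j * norm (canon_proj alpha K (eta j)))"
    using assms(2) by (intro sum.cong) (auto simp: canon_proj_eq)
  finally show ?thesis unfolding x_def .
qed

theorem proposition5:
  fixes alpha :: "nat \<Rightarrow> 'a::euclidean_space" and eta :: "nat \<Rightarrow> 'a"
    and K J :: nat
  assumes "\<forall>k\<in>{1..K}. alpha k \<noteq> 0"
    and "J \<ge> 1"
    and "\<forall>j\<in>{2..J}. norm (canon_proj alpha K (eta j)) < norm (canon_proj alpha K (eta 1))"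
  defines "G \<equiv> {\<Sum>j\<in>{1..J}. \<nu> j *\<^sub>R eta j | \<nu>.
                   (\<forall>j\<in>{1..J}. 0 \<le> \<nu> j \<and> \<nu> j \<le> 1) \<and> (\<Sum>j\<in>{1..J}. \<nu> j) = 1}"
  shows "eta 1 \<in> G \<and>
         (\<forall>x\<in>G. norm (canon_proj alpha K x) \<le> norm (canon_proj alpha K (eta 1))) \<and>
         (\<forall>x\<in>G. norm (canon_proj alpha K x) = norm (canon_proj alpha K (eta 1)) \<longrightarrow> x = eta 1)"
proof -
  define f where "f j = norm (canon_proj alpha K (eta j))" for j
  have split: "\<And>h :: nat \<Rightarrow> 'b::comm_monoid_add. (\<Sum>j\<in>{1..J}. h j) = h 1 + (\<Sum>j\<in>{2..J}. h j)"
    using assms(2) by (simp add: sum.atLeast_Suc_atMost numeral_2_eq_2)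
  have fle: "\<forall>j\<in>{1..J}. f j \<le> f 1"
  proof
    fix j assume j: "j \<in> {1..J}"
    show "f j \<le> f 1"
    proof (cases "j = 1")
      case False then have "j \<in> {2..J}" using j by auto
      then have "f j < f 1" using assms(3) unfolding f_def by blast
      then show ?thesis by simp
    qed simp
  qed
  have main: "norm (canon_proj alpha K x) \<le> f 1 \<and>
      (norm (canon_proj alpha K x) = f 1 \<longrightarrow> x = eta 1)" if xG: "x \<in> G" for x
  proof -
    obtain \<nu> where x: "x = (\<Sum>j\<in>{1..J}. \<nu> j *\<^sub>R eta j)"
      and nu: "\<forall>j\<in>{1..J}. 0 \<le> \<nu> j \<and> \<nu> j \<le> 1" and s: "(\<Sum>j\<in>{1..J}. \<nu> j) = 1"
      using xG unfolding G_def by blast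
    have b: "norm (canon_proj alpha K x) \<le> (\<Sum>j\<in>{1..J}. \<nu> j * f j)"
      unfolding x f_def by (rule cp_convex_bound) (use nu in auto)
    have d: "f 1 - (\<Sum>j\<in>{1..J}. \<nu> j * f j) = (\<Sum>j\<in>{1..J}. \<nu> j * (f 1 - f j))"
    proof -
      have "(\<Sum>j\<in>{1..J}. \<nu> j * (f 1 - f j)) = (\<Sum>j\<in>{1..J}. \<nu> j * f 1) - (\<Sum>j\<in>{1..J}. \<nu> j * f j)"
        by (simp add: right_diff_distrib sum_subtractf)
      moreover have "(\<Sum>j\<in>{1..J}. \<nu> j * f 1) = f 1" using s by (simp add: sum_distrib_right[symmetric])
      ultimately show ?thesis by simp
    qed
    have nn: "\<forall>j\<in>{1..J}. 0 \<le> \<nu> j * (f 1 - f j)" using nu fle by auto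
    then have "0 \<le> (\<Sum>j\<in>{1..J}. \<nu> j * (f 1 - f j))" by (intro sum_nonneg) auto
    then have le: "norm (canon_proj alpha K x) \<le> f 1" using b d by linarith
    moreover have "x = eta 1" if eq: "norm (canon_proj alpha K x) = f 1"
    proof -
      have "(\<Sum>j\<in>{1..J}. \<nu> j * (f 1 - f j)) = 0"
        using b d eq \<open>0 \<le> (\<Sum>j\<in>{1..J}. \<nu> j * (f 1 - f j))\<close> by linarith
      then have z: "\<forall>j\<in>{1..J}. \<nu> j * (f 1 - f j) = 0"
        using sum_nonneg_eq_0_iff[of "{1..J}" "\<lambda>j. \<nu> j * (f 1 - f j)"] nn by auto
      have z2: "\<forall>j\<in>{2..J}. \<nu> j = 0"
      proof
        fix j assume j: "j \<in> {2..J}"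
        then have "f j < f 1" using assms(3) unfolding f_def by blast
        moreover have "\<nu> j * (f 1 - f j) = 0" using z j by auto
        ultimately show "\<nu> j = 0" by simp
      qed
      have "(\<Sum>j\<in>{2..J}. \<nu> j) = 0" using z2 by simp
      then have n1: "\<nu> 1 = 1" using s split[of \<nu>] by simp
      have "(\<Sum>j\<in>{2..J}. \<nu> j *\<^sub>R eta j) = 0" using z2 by simp
      then show "x = eta 1" using split[of "\<lambda>j. \<nu> j *\<^sub>R eta j"] n1 x by simp
    qed
    ultimately show ?thesis by blast
  qed
  have "eta 1 \<in> G"
  proof -
    have "eta 1 = (\<Sum>j\<in>{1..J}. (if j = 1 then 1 else 0) *\<^sub>R eta j)"
      using split[of "\<lambda>j. (if j = 1 then 1 else 0) *\<^sub>R eta j"] by simp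
    moreover have "(\<forall>j\<in>{1..J}. 0 \<le> (if j = 1 then 1 else 0::real) \<and> (if j = 1 then 1 else 0::real) \<le> 1)
        \<and> (\<Sum>j\<in>{1..J}. (if j = 1 then 1 else 0::real)) = 1"
      using split[of "\<lambda>j. (if j = 1 then 1 else 0::real)"] by simp
    ultimately show ?thesis unfolding G_def
      by (intro CollectI exI[of _ "\<lambda>j. if j = 1 then 1 else 0"]) blast
  qed
  then show ?thesis using main unfolding f_def by blast
qed

end
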